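(* Consider the infinite-horizon $N$-player KL-regularized Markov game and the algorithm described in the context (run with any $\alpha>0$), and suppose the linear mixture assumption and the realizability assumption hold. Define, for $t\in[T]$, $f\in\mathcal F$, $n\in[N]$, $$X_t^f=\log\frac{\mathbb{P}(s'_t|s_t,\boldsymbol a_t)}{\mathbb{P}_f(s'_t|s_t,\boldsymbol a_t)},\qquad Y_{t,n}^f=\log\frac{\mathbb{P}({s^n_t}'|s^n_t,\boldsymbol a^n_t)}{\mathbb{P}_f({s^n_t}'|s^n_t,\boldsymbol a^n_t)},$$ and $\ell(f,s,\boldsymbol a)=D_H^2\big(\mathbb{P}_f(\cdot|s,\boldsymbol a)\,\|\,\mathbb{P}(\cdot|s,\boldsymbol a)\big)$. Then for any $\delta\in(0,1)$, with probability at least $1-\delta$, for all $t\in[T]$ and $f\in\mathcal F$, $$-\sum_{i=1}^{t-1}X_i^f\le-2\sum_{i=1}^{t-1}\mathbb{E}_{(s,\boldsymbol a)\sim d^{\boldsymbol\pi_i}(\rho)}[\ell(f,s,\boldsymbol a)]+2\sqrt2+2\log\Big(\frac{N+1}{\delta}\Big)+2d\log\big(1+2\sqrt d\,T^2|\mathcal S|^2\big),$$ and for all $t\in[T]$, $f\in\mathcal F$, $n\in[N]$, $$-\sum_{i=1}^{t-1}Y_{i,n}^f\le-2\sum_{i=1}^{t-1}\mathbb{E}_{(s,\boldsymbol a)\sim d^{\widetilde{\boldsymbol\pi}_{i,n}}(\rho)}[\ell(f,s,\boldsymbol a)]+2\sqrt2+2\log\Big(\frac{N+1}{\delta}\Big)+2d\log\big(1+2\sqrt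 d\,T^2|\mathcal S|^2\big),$$ where $\widetilde{\boldsymbol\pi}_{i,n}=(\widetilde\pi^n_i,\boldsymbol\pi_i^{-n})$.
   Context: Game: $N$ players, finite state space $\mathcal{S}$, joint action space $\mathcal{A}=\mathcal{A}_1\times\cdots\times\mathcal{A}_N$, discount $\gamma\in[0,1)$, true transition kernel $\mathbb{P}:\mathcal{S}\times\mathcal{A}\to\Delta(\mathcal{S})$, rewards $r^n\in[0,1]$, initial distribution $\rho$, KL coefficient $\beta\ge0$, reference policies $\pi^n_{\mathrm{ref}}$. Joint policies $\boldsymbol\pi=(\pi^1,\dots,\pi^N)$, $\pi^n:\mathcal S\to\Delta(\mathcal A_n)$; $\boldsymbol\pi^{-n}$ = all but player $n$. For a kernel $Q$, $V^{\boldsymbol\pi}_{Q,n}(\rho)=\mathbb{E}_{s_0\sim\rho}\mathbb{E}_{Q,\boldsymbol\pi}[\sum_{h\ge0}\gamma^h(r^n(s_h,\boldsymbol a_h)-\beta\log\frac{\pi^n(a^n_h|s_h)}{\pi^n_{\mathrm{ref}}(a^n_h|s_h)})]$; $V_{f,n}^{\boldsymbol\pi}:=V^{\boldsymbol\pi}_{\mathbb P_f,n}$, $V_{f,n}^{\star,\boldsymbol\pi^{-n}}(\rho)=\max_{\pi^n}V_{f,n}^{\pi^n,\boldsymbol\pi^{-n}}(\rho)$. Discounted visitation under the true kernel: $d^{\boldsymbol\pi}_{\bar s,\bar{\boldsymbol a}}(\rho)=(1-\gamma)\sum_{h\ge0}\gamma^h\mathbb{P}^{\boldsymbol\pi}(s_h=\bar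 s,\boldsymbol a_h=\bar{\boldsymbol a})$ with $s_0\sim\rho$. Squared Hellinger distance: $D_H^2(P\|Q)=\frac12\sum_x(\sqrt{P(x)}-\sqrt{Q(x)})^2$. Linear mixture assumption: $\mathcal{F}=\{f: f(s,\boldsymbol a,s')=\phi(s,\boldsymbol a,s')^\top\theta,\ \theta\in\Theta\}$, known $\phi:\mathcal S\times\mathcal A\times\mathcal S\to\mathbb R^d$ with $\|\phi\|_2\le1$, $\Theta\subseteq\{\|\theta\|_2\le\sqrt d\}$, and $\mathbb P_f(\cdot|s,\boldsymbol a):=f(s,\boldsymbol a,\cdot)\in\Delta(\mathcal S)$ for all $f\in\mathcal F$. Realizability: some $f^\star\in\mathcal F$ has $\mathbb P_{f^\star}=\mathbb P$. Algorithm: datasets $\mathcal D^n_0=\emptyset$, $\mathcal D_0=\cup_n\mathcal D^n_0$; for $t=1,\dots,T$: $\boldsymbol\pi_t$ is a Nash or coarse correlated equilibrium of the regularized game with kernel $\mathbb P_{f_{t-1}}$; $f_t\in\arg\min_{f\in\mathcal F}\sum_{(s,\boldsymbol a,s')\in\mathcal D_{t-1}}-\log\mathbb P_f(s'|s,\boldsymbol a)-\alpha\sum_n V_{f,n}^{\star,\boldsymbol\pi_t^{-n}}(\rho)$; $\widetilde\pi^n_t\in\arg\max_{\pi^n}V_{f_t,n}^{\pi^n,\boldsymbol\pi_t^{-n}}(\rho)$; then fresh samples $(s_t,\boldsymbol a_t)\sim d^{\boldsymbol\pi_t}(\rho)$, $s_t'\sim\mathbb P(\cdot|s_t,\boldsymbol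 a_t)$, and for each $n$, $(s^n_t,\boldsymbol a^n_t)\sim d^{(\widetilde\pi^n_t,\boldsymbol\pi_t^{-n})}(\rho)$, ${s^n_t}'\sim\mathbb P(\cdot|s^n_t,\boldsymbol a^n_t)$; $\mathcal D^n_t=\mathcal D^n_{t-1}\cup\{(s_t,\boldsymbol a_t,s_t'),(s^n_t,\boldsymbol a^n_t,{s^n_t}')\}$, $\mathcal D_t=\cup_n\mathcal D^n_t$. *)

theory Defs
  imports "HOL-Analysis.Analysis" "HOL-Probability.Probability"
begin

text \<open>Players are the elements of a finite type 'p (so N = CARD('p)), states the elements
  of a finite type 's, individual actions live in a type 'b with per-player action sets
  A n.  Parameters theta live in real^'d
  (so d = CARD('d)).\<close>

type_synonym ('s,'p,'b) transition = "'s \<times> ('p \<Rightarrow> 'b) \<times> 's"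
type_synonym ('s,'p,'b) round = "('s,'p,'b) transition \<times> ('p \<Rightarrow> ('s,'p,'b) transition)"

definition joint_actions :: "('p \<Rightarrow> 'b set) \<Rightarrow> ('p \<Rightarrow> 'b) set" where
  "joint_actions A = {a. \<forall>n. a n \<in> A n}"

definition valid_policy :: "'b set \<Rightarrow> ('s \<Rightarrow> 'b pmf) \<Rightarrow> bool" where
  "valid_policy An \<sigma> \<longleftrightarrow> (\<forall>s. set_pmf (\<sigma> s) \<subseteq> An)"

definition valid_jpolicy :: "('p \<Rightarrow> 'b set) \<Rightarrow> ('p \<Rightarrow> 's \<Rightarrow> 'b pmf) \<Rightarrow> bool" where
  "valid_jpolicy A \<pi> \<longleftrightarrow> (\<forall>n. valid_policy (A n) (\<pi> n))"

definition jact_dist :: "('p::finite \<Rightarrow> 's \<Rightarrow> 'b pmf) \<Rightarrow> 's \<Rightarrow> ('p \<Rightarrow> 'b) pmf" where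
  "jact_dist \<pi> s = Pi_pmf UNIV undefined (\<lambda>n. \<pi> n s)"

primrec state_dist :: "('s \<Rightarrow> ('p \<Rightarrow> 'b) \<Rightarrow> 's pmf) \<Rightarrow> ('p::finite \<Rightarrow> 's \<Rightarrow> 'b pmf)
    \<Rightarrow> 's pmf \<Rightarrow> nat \<Rightarrow> 's pmf" where
  "state_dist Q \<pi> \<rho> 0 = \<rho>"
| "state_dist Q \<pi> \<rho> (Suc h) =
     bind_pmf (state_dist Q \<pi> \<rho> h) (\<lambda>s. bind_pmf (jact_dist \<pi> s) (\<lambda>a. Q s a))"

definition sa_dist :: "('s \<Rightarrow> ('p \<Rightarrow> 'b) \<Rightarrow> 's pmf) \<Rightarrow> ('p::finite \<Rightarrow> 's \<Rightarrow> 'b pmf)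
    \<Rightarrow> 's pmf \<Rightarrow> nat \<Rightarrow> ('s \<times> ('p \<Rightarrow> 'b)) pmf" where
  "sa_dist Q \<pi> \<rho> h = bind_pmf (state_dist Q \<pi> \<rho> h) (\<lambda>s. map_pmf (\<lambda>a. (s, a)) (jact_dist \<pi> s))"

text \<open>Discounted visitation d^pi(rho) = (1-gamma) sum_h gamma^h P(s_h, a_h), realised as the
  mixture of the laws of (s_h,a_h) with geometric weights (1-gamma) gamma^h.\<close>
definition visitation :: "real \<Rightarrow> ('s \<Rightarrow> ('p \<Rightarrow> 'b) \<Rightarrow> 's pmf) \<Rightarrow> ('p::finite \<Rightarrow> 's \<Rightarrow> 'b pmf)
    \<Rightarrow> 's pmf \<Rightarrow> ('s \<times> ('p \<Rightarrow> 'b)) pmf" where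
  "visitation \<gamma> Q \<pi> \<rho> = bind_pmf (geometric_pmf (1 - \<gamma>)) (\<lambda>h. sa_dist Q \<pi> \<rho> h)"

definition reg_reward :: "real \<Rightarrow> ('p \<Rightarrow> 's \<Rightarrow> 'b pmf) \<Rightarrow> ('p \<Rightarrow> 's \<Rightarrow> ('p \<Rightarrow> 'b) \<Rightarrow> real)
    \<Rightarrow> ('p \<Rightarrow> 's \<Rightarrow> 'b pmf) \<Rightarrow> 'p \<Rightarrow> 's \<Rightarrow> ('p \<Rightarrow> 'b) \<Rightarrow> real" where
  "reg_reward \<beta> \<pi>ref r \<pi> n s a =
     r n s a - \<beta> * ln (pmf (\<pi> n s) (a n) / pmf (\<pi>ref n s) (a n))"

definition game_value :: "real \<Rightarrow> real \<Rightarrow> ('p \<Rightarrow> 's \<Rightarrow> 'b pmf) \<Rightarrow> ('p \<Rightarrow> 's \<Rightarrow> ('p \<Rightarrow> 'b) \<Rightarrow> real)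
    \<Rightarrow> ('s \<Rightarrow> ('p \<Rightarrow> 'b) \<Rightarrow> 's pmf) \<Rightarrow> ('p::finite \<Rightarrow> 's \<Rightarrow> 'b pmf) \<Rightarrow> 'p \<Rightarrow> 's pmf \<Rightarrow> real" where
  "game_value \<gamma> \<beta> \<pi>ref r Q \<pi> n \<rho> =
     (\<Sum>h. \<gamma> ^ h * measure_pmf.expectation (sa_dist Q \<pi> \<rho> h)
                     (\<lambda>(s, a). reg_reward \<beta> \<pi>ref r \<pi> n s a))"

definition br_value :: "real \<Rightarrow> real \<Rightarrow> ('p \<Rightarrow> 's \<Rightarrow> 'b pmf) \<Rightarrow> ('p \<Rightarrow> 's \<Rightarrow> ('p \<Rightarrow> 'b) \<Rightarrow> real)
    \<Rightarrow> ('p \<Rightarrow> 'b set) \<Rightarrow> ('s \<Rightarrow> ('p \<Rightarrow> 'b) \<Rightarrow> 's pmf) \<Rightarrow> ('p::finite \<Rightarrow> 's \<Rightarrow> 'b pmf)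
    \<Rightarrow> 'p \<Rightarrow> 's pmf \<Rightarrow> real" where
  "br_value \<gamma> \<beta> \<pi>ref r A Q \<pi> n \<rho> =
     (SUP \<sigma> \<in> {\<sigma>. valid_policy (A n) \<sigma>}. game_value \<gamma> \<beta> \<pi>ref r Q (\<pi>(n := \<sigma>)) n \<rho>)"

text \<open>Nash / coarse correlated equilibrium (for product joint policies the two conditions
  coincide): no player gains by a unilateral deviation.\<close>
definition is_equilibrium :: "real \<Rightarrow> real \<Rightarrow> ('p \<Rightarrow> 's \<Rightarrow> 'b pmf) \<Rightarrow> ('p \<Rightarrow> 's \<Rightarrow> ('p \<Rightarrow> 'b) \<Rightarrow> real)
    \<Rightarrow> ('p \<Rightarrow> 'b set) \<Rightarrow> ('s \<Rightarrow> ('p \<Rightarrow> 'b) \<Rightarrow> 's pmf) \<Rightarrow> ('p::finite \<Rightarrow> 's \<Rightarrow> 'b pmf)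
    \<Rightarrow> 's pmf \<Rightarrow> bool" where
  "is_equilibrium \<gamma> \<beta> \<pi>ref r A Q \<pi> \<rho> \<longleftrightarrow>
     valid_jpolicy A \<pi> \<and>
     (\<forall>n. br_value \<gamma> \<beta> \<pi>ref r A Q \<pi> n \<rho> \<le> game_value \<gamma> \<beta> \<pi>ref r Q \<pi> n \<rho>)"

definition model_kernel :: "('s \<Rightarrow> ('p \<Rightarrow> 'b) \<Rightarrow> 's \<Rightarrow> real^'d) \<Rightarrow> real^'d
    \<Rightarrow> 's \<Rightarrow> ('p \<Rightarrow> 'b) \<Rightarrow> 's pmf" where
  "model_kernel \<phi> \<theta> s a = embed_pmf (\<lambda>s'. \<phi> s a s' \<bullet> \<theta>)"

definition hellinger_sq :: "'s::finite pmf \<Rightarrow> 's pmf \<Rightarrow> real" where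
  "hellinger_sq p q = (1/2) * (\<Sum>x\<in>UNIV. (sqrt (pmf p x) - sqrt (pmf q x))^2)"

definition llr :: "'s pmf \<Rightarrow> 's pmf \<Rightarrow> 's \<Rightarrow> ereal" where
  "llr p q x = (if pmf q x = 0 then \<infinity> else ereal (ln (pmf p x / pmf q x)))"

definition nll :: "'s pmf \<Rightarrow> 's \<Rightarrow> ereal" where
  "nll q x = (if pmf q x = 0 then \<infinity> else ereal (- ln (pmf q x)))"

definition model_nll :: "('s \<Rightarrow> ('p \<Rightarrow> 'b) \<Rightarrow> 's \<Rightarrow> real^'d) \<Rightarrow> real^'d
    \<Rightarrow> ('s,'p,'b) transition \<Rightarrow> ereal" where
  "model_nll \<phi> \<theta> z = (case z of (s, a, s') \<Rightarrow> nll (model_kernel \<phi> \<theta> s a) s')"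

definition llr_sample :: "('s \<Rightarrow> ('p \<Rightarrow> 'b) \<Rightarrow> 's pmf) \<Rightarrow> ('s \<Rightarrow> ('p \<Rightarrow> 'b) \<Rightarrow> 's \<Rightarrow> real^'d)
    \<Rightarrow> real^'d \<Rightarrow> ('s,'p,'b) transition \<Rightarrow> ereal" where
  "llr_sample P \<phi> \<theta> z = (case z of (s, a, s') \<Rightarrow> llr (P s a) (model_kernel \<phi> \<theta> s a) s')"

definition ell :: "('s::finite \<Rightarrow> ('p \<Rightarrow> 'b) \<Rightarrow> 's pmf) \<Rightarrow> ('s \<Rightarrow> ('p \<Rightarrow> 'b) \<Rightarrow> 's \<Rightarrow> real^'d)
    \<Rightarrow> real^'d \<Rightarrow> 's \<Rightarrow> ('p \<Rightarrow> 'b) \<Rightarrow> real" where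
  "ell P \<phi> \<theta> s a = hellinger_sq (model_kernel \<phi> \<theta> s a) (P s a)"

text \<open>MLE objective of the algorithm: the data D_{t-1} is the collection of all samples of the
  rounds 1..t-1 (one "on-policy" sample and one sample per player in each round).\<close>
definition mle_objective :: "real \<Rightarrow> real \<Rightarrow> ('p \<Rightarrow> 's \<Rightarrow> 'b pmf) \<Rightarrow> ('p \<Rightarrow> 's \<Rightarrow> ('p \<Rightarrow> 'b) \<Rightarrow> real)
    \<Rightarrow> ('p \<Rightarrow> 'b set) \<Rightarrow> ('s \<Rightarrow> ('p \<Rightarrow> 'b) \<Rightarrow> 's \<Rightarrow> real^'d) \<Rightarrow> real \<Rightarrow> 's pmf
    \<Rightarrow> ('s,'p::finite,'b) round list \<Rightarrow> ('p \<Rightarrow> 's \<Rightarrow> 'b pmf) \<Rightarrow> real^'d \<Rightarrow> ereal" where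
  "mle_objective \<gamma> \<beta> \<pi>ref r A \<phi> \<alpha> \<rho> D \<pi> \<theta> =
     sum_list (map (\<lambda>w. model_nll \<phi> \<theta> (fst w) + (\<Sum>n\<in>UNIV. model_nll \<phi> \<theta> (snd w n))) D)
     - ereal (\<alpha> * (\<Sum>n\<in>UNIV. br_value \<gamma> \<beta> \<pi>ref r A (model_kernel \<phi> \<theta>) \<pi> n \<rho>))"

definition transition_sample :: "real \<Rightarrow> ('s \<Rightarrow> ('p \<Rightarrow> 'b) \<Rightarrow> 's pmf) \<Rightarrow> ('p::finite \<Rightarrow> 's \<Rightarrow> 'b pmf)
    \<Rightarrow> 's pmf \<Rightarrow> ('s,'p,'b) transition pmf" where
  "transition_sample \<gamma> P \<pi> \<rho> =
     bind_pmf (visitation \<gamma> P \<pi> \<rho>) (\<lambda>(s, a). map_pmf (\<lambda>s'. (s, a, s')) (P s a))"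

text \<open>Fresh independent samples of one round, given pi_t and the best responses tilde pi^n_t.\<close>
definition round_dist :: "real \<Rightarrow> ('s \<Rightarrow> ('p \<Rightarrow> 'b) \<Rightarrow> 's pmf) \<Rightarrow> 's pmf
    \<Rightarrow> ('p::finite \<Rightarrow> 's \<Rightarrow> 'b pmf) \<Rightarrow> ('p \<Rightarrow> 's \<Rightarrow> 'b pmf) \<Rightarrow> ('s,'p,'b) round pmf" where
  "round_dist \<gamma> P \<rho> \<pi> \<pi>t =
     pair_pmf (transition_sample \<gamma> P \<pi> \<rho>)
              (Pi_pmf UNIV undefined (\<lambda>n. transition_sample \<gamma> P (\<pi>(n := \<pi>t n)) \<rho>))"

text \<open>Law of the sample history of the first k rounds, when pi_t = Pol(history of rounds < t)
  and tilde pi^n_t = Br(history of rounds < t) n.\<close>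
primrec run_dist :: "real \<Rightarrow> ('s \<Rightarrow> ('p \<Rightarrow> 'b) \<Rightarrow> 's pmf) \<Rightarrow> 's pmf
    \<Rightarrow> (('s,'p::finite,'b) round list \<Rightarrow> 'p \<Rightarrow> 's \<Rightarrow> 'b pmf)
    \<Rightarrow> (('s,'p,'b) round list \<Rightarrow> 'p \<Rightarrow> 's \<Rightarrow> 'b pmf) \<Rightarrow> nat \<Rightarrow> ('s,'p,'b) round list pmf" where
  "run_dist \<gamma> P \<rho> Pol Br 0 = return_pmf []"
| "run_dist \<gamma> P \<rho> Pol Br (Suc k) =
     bind_pmf (run_dist \<gamma> P \<rho> Pol Br k)
       (\<lambda>hs. map_pmf (\<lambda>w. hs @ [w]) (round_dist \<gamma> P \<rho> (Pol hs) (Br hs)))"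

end

theory Submission
  imports Defs
begin

lemma packing_card:
  fixes F :: "(real^'d) set"
  assumes fin: "finite F" and sub: "F \<subseteq> cball 0 R" and eps: "0 < \<epsilon>" and R0: "0 \<le> R"
    and sep: "\<forall>x\<in>F. \<forall>y\<in>F. x \<noteq> y \<longrightarrow> \<epsilon> \<le> dist x y"
  shows "real (card F) \<le> (1 + 2 * R / \<epsilon>) ^ CARD('d)"
proof (cases "F = {}")
  case True then show ?thesis using eps R0
    by (simp add: add_nonneg_nonneg)
next
  case False
  then obtain x where "x \<in> F" by auto
  let ?V = "unit_ball_vol (real CARD('d))"
  have V: "?V > 0" by simp
  have fm: "\<And>c r. ball (c::real^'d) r \<in> fmeasurable lborel"
    using emeasure_lborel_ball_finite by (auto simp: fmeasurable_def top_unique less_top)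
  have "measure lborel (\<Union>c\<in>F. ball c (\<epsilon>/2)) = (\<Sum>c\<in>F. measure lborel (ball c (\<epsilon>/2)))"
  proof (rule measure_UNION'[OF fin])
    show "pairwise (\<lambda>i j. disjnt (ball i (\<epsilon> / 2)) (ball j (\<epsilon> / 2))) F"
      unfolding pairwise_def disjnt_def
    proof (intro ballI impI)
      fix i j assume "i \<in> F" "j \<in> F" "i \<noteq> j"
      hence "\<epsilon> \<le> dist i j" using sep by auto
      then show "ball i (\<epsilon> / 2) \<inter> ball j (\<epsilon> / 2) = {}"
        by (simp add: disjoint_ballI)
    qed
  qed (simp add: fm)
  also have "\<dots> = real (card F) * (?V * (\<epsilon>/2) ^ CARD('d))"
    using eps by (simp add: content_ball)
  finally have e1: "measure lborel (\<Union>c\<in>F. ball c (\<epsilon>/2)) = real (card F) * (?V * (\<epsilon>/2) ^ CARD('d))" .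
  have "(\<Union>c\<in>F. ball c (\<epsilon>/2)) \<subseteq> ball 0 (R + \<epsilon>/2)"
  proof (rule subsetI)
    fix x assume "x \<in> (\<Union>c\<in>F. ball c (\<epsilon>/2))"
    then obtain c where "c \<in> F" "dist c x < \<epsilon>/2" by auto
    moreover have "dist 0 x \<le> dist 0 c + dist c x" by (rule dist_triangle)
    ultimately show "x \<in> ball 0 (R + \<epsilon>/2)" using sub by force
  qed
  hence "measure lborel (\<Union>c\<in>F. ball c (\<epsilon>/2)) \<le> measure lborel (ball (0::real^'d) (R + \<epsilon>/2))"
    by (intro measure_mono_fmeasurable) (auto simp: fm intro!: borel_open open_UN)
  also have "\<dots> = ?V * (R + \<epsilon>/2) ^ CARD('d)" using eps R0 by (simp add: content_ball)
  finally have "real (card F) * (\<epsilon>/2) ^ CARD('d) \<le> (R + \<epsilon>/2) ^ CARD('d)"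
    using e1 V by (simp add: mult.left_commute)
  hence "real (card F) \<le> (R + \<epsilon>/2) ^ CARD('d) / (\<epsilon>/2) ^ CARD('d)"
    using eps by (simp add: pos_le_divide_eq)
  also have "\<dots> = ((R + \<epsilon>/2) / (\<epsilon>/2)) ^ CARD('d)" by (simp only: power_divide)
  also have "(R + \<epsilon>/2) / (\<epsilon>/2) = 1 + 2 * R / \<epsilon>" using eps by (simp add: field_simps)
  finally show ?thesis .
qed

lemma cover_exists:
  fixes \<Theta> :: "(real^'d) set"
  assumes sub: "\<Theta> \<subseteq> cball 0 R" and eps: "0 < \<epsilon>" and R0: "0 \<le> R"
  obtains C where "finite C" "C \<subseteq> \<Theta>" "real (card C) \<le> (1 + 2 * R / \<epsilon>) ^ CARD('d)"
    "\<forall>\<theta>\<in>\<Theta>. \<exists>c\<in>C. dist \<theta> c < \<epsilon>"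
proof -
  define S where "S = {F. finite F \<and> F \<subseteq> \<Theta> \<and> (\<forall>x\<in>F. \<forall>y\<in>F. x \<noteq> y \<longrightarrow> \<epsilon> \<le> dist x y)}"
  have bnd: "\<forall>F\<in>S. card F \<le> nat \<lceil>(1 + 2 * R / \<epsilon>) ^ CARD('d)\<rceil>"
  proof
    fix F assume "F \<in> S"
    hence "real (card F) \<le> (1 + 2 * R / \<epsilon>) ^ CARD('d)"
      using packing_card[of F R \<epsilon>] sub eps R0 unfolding S_def by auto
    then show "card F \<le> nat \<lceil>(1 + 2 * R / \<epsilon>) ^ CARD('d)\<rceil>" by linarith
  qed
  have "{} \<in> S" by (simp add: S_def)
  then obtain F where F: "F \<in> S" "\<forall>G\<in>S. card G \<le> card F"
    using ex_has_greatest_nat_lemma[of "\<lambda>F. F \<in> S" "{}" card] bnd Lattices_Big.ex_has_greatest_nat[of "\<lambda>F. F \<in> S" "{}" card "Suc (nat \<lceil>(1 + 2 * R / \<epsilon>) ^ CARD('d)\<rceil>)"] by force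
  show ?thesis
  proof
    show "finite F" "F \<subseteq> \<Theta>" using F by (auto simp: S_def)
    show "real (card F) \<le> (1 + 2 * R / \<epsilon>) ^ CARD('d)"
      using packing_card[of F R \<epsilon>] sub eps R0 F unfolding S_def by auto
    show "\<forall>\<theta>\<in>\<Theta>. \<exists>c\<in>F. dist \<theta> c < \<epsilon>"
    proof (rule ccontr)
      assume "\<not> ?thesis"
      then obtain \<theta> where th: "\<theta> \<in> \<Theta>" "\<forall>c\<in>F. \<epsilon> \<le> dist \<theta> c" by force
      hence nin: "\<theta> \<notin> F" using eps by force
      have "insert \<theta> F \<in> S" using F th unfolding S_def by (auto simp: dist_commute)
      hence "card (insert \<theta> F) \<le> card F" using F by auto
      thus False using nin F by (auto simp: S_def)
    qed
  qed
qed

primrec grun :: "('h list \<Rightarrow> 'h pmf) \<Rightarrow> nat \<Rightarrow> 'h list pmf" where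
  "grun K 0 = return_pmf []"
| "grun K (Suc k) = bind_pmf (grun K k) (\<lambda>hs. map_pmf (\<lambda>w. hs @ [w]) (K hs))"

lemma grun_length: "hs \<in> set_pmf (grun K k) \<Longrightarrow> length hs = k"
  by (induction k arbitrary: hs) auto

definition prodg :: "('h list \<Rightarrow> 'h \<Rightarrow> real) \<Rightarrow> 'h list \<Rightarrow> nat \<Rightarrow> real" where
  "prodg g hs t = (\<Prod>i<t. g (take i hs) (hs ! i))"

definition stopd :: "real \<Rightarrow> ('h list \<Rightarrow> 'h \<Rightarrow> real) \<Rightarrow> 'h list \<Rightarrow> nat \<Rightarrow> bool" where
  "stopd c g hs i \<longleftrightarrow> (\<exists>j\<le>i. c \<le> prodg g hs j)"

definition sprod :: "real \<Rightarrow> ('h list \<Rightarrow> 'h \<Rightarrow> real) \<Rightarrow> 'h list \<Rightarrow> real" where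
  "sprod c g hs = (\<Prod>i<length hs. if stopd c g hs i then 1 else g (take i hs) (hs ! i))"

lemma prodg_append: "t \<le> length hs \<Longrightarrow> prodg g (hs @ [w]) t = prodg g hs t"
  unfolding prodg_def by (intro prod.cong) (auto simp: nth_append)

lemma prodg_append_last: "prodg g (hs @ [w]) (Suc (length hs)) = prodg g hs (length hs) * g hs w"
  using prodg_append[of "length hs" hs g w] unfolding prodg_def by simp

lemma stopd_append: "i \<le> length hs \<Longrightarrow> stopd c g (hs @ [w]) i = stopd c g hs i"
  unfolding stopd_def using prodg_append by (metis le_trans)

lemma sprod_append:
  "sprod c g (hs @ [w]) = sprod c g hs * (if stopd c g hs (length hs) then 1 else g hs w)"
proof -
  have "sprod c g (hs @ [w]) = (\<Prod>i<Suc (length hs). if stopd c g (hs @ [w]) i then 1 else g (take i (hs @ [w])) ((hs @ [w]) ! i))"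
    unfolding sprod_def by simp
  also have "\<dots> = (\<Prod>i<length hs. if stopd c g (hs @ [w]) i then 1 else g (take i (hs @ [w])) ((hs @ [w]) ! i))
      * (if stopd c g (hs @ [w]) (length hs) then 1 else g (take (length hs) (hs @ [w])) ((hs @ [w]) ! length hs))"
    by (rule prod.lessThan_Suc)
  also have "(\<Prod>i<length hs. if stopd c g (hs @ [w]) i then 1 else g (take i (hs @ [w])) ((hs @ [w]) ! i))
      = sprod c g hs"
    unfolding sprod_def by (intro prod.cong) (auto simp: stopd_append nth_append)
  finally show ?thesis by (simp add: stopd_append)
qed

lemma sprod_nonneg: "(\<And>hs w. 0 \<le> g hs w) \<Longrightarrow> 0 \<le> sprod c g hs"
  unfolding sprod_def by (intro prod_nonneg) auto

lemma sprod_ge: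
  assumes "t \<le> length hs" "c \<le> prodg g hs t"
  shows "c \<le> sprod c g hs"
proof -
  define t0 where "t0 = (LEAST t. c \<le> prodg g hs t)"
  have t0: "c \<le> prodg g hs t0" unfolding t0_def by (rule LeastI[of _ t]) (use assms in auto)
  have t0le: "t0 \<le> t" unfolding t0_def using assms by (intro Least_le) auto
  have notb: "\<not> c \<le> prodg g hs j" if "j < t0" for j
    using that not_less_Least unfolding t0_def by blast
  have "sprod c g hs = (\<Prod>i\<in>{..<t0} \<union> {t0..<length hs}. if stopd c g hs i then 1 else g (take i hs) (hs ! i))"
    unfolding sprod_def using t0le assms(1) by (intro prod.cong) auto
  also have "\<dots> = (\<Prod>i<t0. if stopd c g hs i then 1 else g (take i hs) (hs ! i))
     * (\<Prod>i\<in>{t0..<length hs}. if stopd c g hs i then 1 else g (take i hs) (hs ! i))"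
    by (rule prod.union_disjoint) auto
  also have "(\<Prod>i<t0. if stopd c g hs i then 1 else g (take i hs) (hs ! i)) = prodg g hs t0"
    unfolding prodg_def
  proof (intro prod.cong refl)
    fix i assume "i \<in> {..<t0}"
    hence "\<not> stopd c g hs i" using notb unfolding stopd_def by force
    thus "(if stopd c g hs i then 1 else g (take i hs) (hs ! i)) = g (take i hs) (hs ! i)" by simp
  qed
  also have "(\<Prod>i\<in>{t0..<length hs}. if stopd c g hs i then 1 else g (take i hs) (hs ! i)) = 1"
    using t0 unfolding stopd_def by (intro prod.neutral) auto
  finally show ?thesis using t0 by simp
qed

lemma ville_pmf:
  fixes g :: "'h list \<Rightarrow> 'h \<Rightarrow> real"
  assumes gnn: "\<And>hs w. 0 \<le> g hs w"
    and mean: "\<And>hs. length hs < T \<Longrightarrow> (\<integral>\<^sup>+w. ennreal (g hs w) \<partial>measure_pmf (K hs)) \<le> 1"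
    and c: "0 < c"
  shows "measure_pmf.prob (grun K T) {hs. \<exists>t\<le>T. c \<le> prodg g hs t} \<le> 1 / c"
proof -
  have E: "k \<le> T \<Longrightarrow> (\<integral>\<^sup>+hs. ennreal (sprod c g hs) \<partial>measure_pmf (grun K k)) \<le> 1" for k
  proof (induction k)
    case 0 then show ?case by (simp add: sprod_def)
  next
    case (Suc k)
    have "(\<integral>\<^sup>+hs. ennreal (sprod c g hs) \<partial>measure_pmf (grun K (Suc k)))
        = (\<integral>\<^sup>+hs. (\<integral>\<^sup>+w. ennreal (sprod c g (hs @ [w])) \<partial>measure_pmf (K hs)) \<partial>measure_pmf (grun K k))"
      by simp
    also have "\<dots> \<le> (\<integral>\<^sup>+hs. ennreal (sprod c g hs) \<partial>measure_pmf (grun K k))"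
    proof (rule nn_integral_mono_AE, rule AE_pmfI)
      fix hs assume hs: "hs \<in> set_pmf (grun K k)"
      hence len: "length hs < T" using grun_length Suc.prems by fastforce
      show "(\<integral>\<^sup>+w. ennreal (sprod c g (hs @ [w])) \<partial>measure_pmf (K hs)) \<le> ennreal (sprod c g hs)"
      proof (cases "stopd c g hs (length hs)")
        case True
        then show ?thesis by (simp add: sprod_append)
      next
        case False
        have "(\<integral>\<^sup>+w. ennreal (sprod c g (hs @ [w])) \<partial>measure_pmf (K hs))
            = (\<integral>\<^sup>+w. ennreal (sprod c g hs) * ennreal (g hs w) \<partial>measure_pmf (K hs))"
          using False sprod_nonneg[of g c hs] gnn by (simp add: sprod_append ennreal_mult)
        also have "\<dots> = ennreal (sprod c g hs) * (\<integral>\<^sup>+w. ennreal (g hs w) \<partial>measure_pmf (K hs))"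
          by (rule nn_integral_cmult) simp
        also have "\<dots> \<le> ennreal (sprod c g hs) * 1"
          by (intro mult_left_mono mean len) simp
        finally show ?thesis by simp
      qed
    qed
    also have "\<dots> \<le> 1" using Suc by simp
    finally show ?case .
  qed
  let ?A = "{hs. \<exists>t\<le>T. c \<le> prodg g hs t}"
  have "emeasure (measure_pmf (grun K T)) ?A = (\<integral>\<^sup>+hs. indicator ?A hs \<partial>measure_pmf (grun K T))"
    by simp
  also have "\<dots> \<le> (\<integral>\<^sup>+hs. ennreal (1/c) * ennreal (sprod c g hs) \<partial>measure_pmf (grun K T))"
  proof (rule nn_integral_mono_AE, rule AE_pmfI)
    fix hs assume hs: "hs \<in> set_pmf (grun K T)"
    show "indicator ?A hs \<le> ennreal (1/c) * ennreal (sprod c g hs)"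
    proof (cases "hs \<in> ?A")
      case True
      then obtain t where "t \<le> T" "c \<le> prodg g hs t" by auto
      hence "c \<le> sprod c g hs" using sprod_ge grun_length[OF hs] by metis
      hence "1 \<le> (1/c) * sprod c g hs" using c by (simp add: field_simps)
      hence "ennreal 1 \<le> ennreal ((1/c) * sprod c g hs)" by (rule ennreal_leI)
      moreover have "ennreal ((1/c) * sprod c g hs) = ennreal (1/c) * ennreal (sprod c g hs)"
        using c \<open>c \<le> sprod c g hs\<close> by (intro ennreal_mult) auto
      ultimately have "1 \<le> ennreal (1/c) * ennreal (sprod c g hs)" by (metis ennreal_1)
      then show ?thesis using True by simp
    qed simp
  qed
  also have "\<dots> = ennreal (1/c) * (\<integral>\<^sup>+hs. ennreal (sprod c g hs) \<partial>measure_pmf (grun K T))"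
    by (rule nn_integral_cmult) simp
  also have "\<dots> \<le> ennreal (1/c) * 1" by (intro mult_left_mono E) auto
  finally have "emeasure (measure_pmf (grun K T)) ?A \<le> ennreal (1/c)" by simp
  then show ?thesis using c by (simp add: measure_pmf.emeasure_eq_measure)
qed

lemma pmf_model:
  fixes \<phi> :: "'s::finite \<Rightarrow> ('p \<Rightarrow> 'b) \<Rightarrow> 's \<Rightarrow> real^'d"
  assumes "\<forall>s'. 0 \<le> \<phi> s a s' \<bullet> \<theta>" "(\<Sum>s'\<in>UNIV. \<phi> s a s' \<bullet> \<theta>) = 1"
  shows "pmf (model_kernel \<phi> \<theta> s a) s' = \<phi> s a s' \<bullet> \<theta>"
proof -
  have "(\<integral>\<^sup>+x. ennreal (\<phi> s a x \<bullet> \<theta>) \<partial>count_space UNIV) = 1"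
    using assms by (simp add: nn_integral_count_space_finite sum_ennreal)
  then show ?thesis unfolding model_kernel_def using assms(1)
    by (subst pmf_embed_pmf) auto
qed

lemma sum_sqrt_pmf: "(\<Sum>x\<in>UNIV. sqrt (pmf p x * pmf q x)) = 1 - hellinger_sq p (q :: 's::finite pmf)"
proof -
  have "hellinger_sq p q = (1/2) * (\<Sum>x\<in>UNIV. pmf p x + pmf q x - 2 * sqrt (pmf p x * pmf q x))"
    unfolding hellinger_sq_def
    by (intro arg_cong[where f="\<lambda>x. (1/2) * x"] sum.cong refl)
       (simp add: power2_diff real_sqrt_mult)
  also have "\<dots> = (1/2) * ((\<Sum>x\<in>UNIV. pmf p x) + (\<Sum>x\<in>UNIV. pmf q x) - 2 * (\<Sum>x\<in>UNIV. sqrt (pmf p x * pmf q x)))"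
    by (simp add: sum.distrib sum_subtractf sum_distrib_left)
  also have "(\<Sum>x\<in>UNIV. pmf p x) = 1" by (rule sum_pmf_eq_1) auto
  also have "(\<Sum>x\<in>UNIV. pmf q x) = 1" by (rule sum_pmf_eq_1) auto
  finally show ?thesis by simp
qed

lemma hellinger_bounds: "0 \<le> hellinger_sq p (q :: 's::finite pmf)" "hellinger_sq p q \<le> 1"
proof -
  show "0 \<le> hellinger_sq p q" unfolding hellinger_sq_def by (intro mult_nonneg_nonneg sum_nonneg) auto
  have "0 \<le> (\<Sum>x\<in>UNIV. sqrt (pmf p x * pmf q x))" by (intro sum_nonneg) auto
  then show "hellinger_sq p q \<le> 1" using sum_sqrt_pmf[of p q] by simp
qed

lemma sum_sqrt_bound:
  fixes p pt :: "'s::finite pmf" and q :: "'s \<Rightarrow> real"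
  assumes q0: "\<And>x. 0 \<le> q x" and qle: "\<And>x. q x \<le> pmf pt x + 2 * \<epsilon>" and e: "0 \<le> \<epsilon>"
  shows "(\<Sum>x\<in>UNIV. sqrt (pmf p x * q x)) \<le> 1 - hellinger_sq pt p + real CARD('s) * sqrt (2 * \<epsilon>)"
proof -
  have "(\<Sum>x\<in>UNIV. sqrt (pmf p x * q x)) \<le> (\<Sum>x\<in>UNIV. sqrt (pmf pt x * pmf p x) + sqrt (2 * \<epsilon>))"
  proof (rule sum_mono)
    fix x :: 's
    have "sqrt (pmf p x * q x) \<le> sqrt (pmf p x * pmf pt x + pmf p x * (2 * \<epsilon>))"
      using qle[of x] by (intro real_sqrt_le_mono) (simp add: distrib_left[symmetric] mult_left_mono)
    also have "\<dots> \<le> sqrt (pmf p x * pmf pt x) + sqrt (pmf p x * (2 * \<epsilon>))"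
      using e by (intro sqrt_add_le_add_sqrt) auto
    also have "sqrt (pmf p x * (2 * \<epsilon>)) \<le> sqrt (2 * \<epsilon>)"
      using e pmf_le_1[of p x] by (intro real_sqrt_le_mono) (simp add: mult_left_le_one_le)
    finally show "sqrt (pmf p x * q x) \<le> sqrt (pmf pt x * pmf p x) + sqrt (2 * \<epsilon>)"
      by (simp add: mult.commute)
  qed
  also have "\<dots> = 1 - hellinger_sq pt p + real CARD('s) * sqrt (2 * \<epsilon>)"
    by (simp add: sum.distrib sum_sqrt_pmf)
  finally show ?thesis .
qed

lemma neg_sum_ereal_le:
  fixes x :: "'i \<Rightarrow> ereal"
  assumes "\<And>i. i \<in> I \<Longrightarrow> - x i \<le> ereal (y i)"
  shows "- (\<Sum>i\<in>I. x i) \<le> ereal (\<Sum>i\<in>I. y i)"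
proof -
  have "(\<Sum>i\<in>I. ereal (- y i)) \<le> (\<Sum>i\<in>I. x i)"
    using assms by (intro sum_mono) (metis ereal_uminus_le_reorder uminus_ereal.simps(1))
  hence "ereal (- (\<Sum>i\<in>I. y i)) \<le> (\<Sum>i\<in>I. x i)" by (simp add: sum_negf)
  thus ?thesis by (metis ereal_uminus_le_reorder uminus_ereal.simps(1))
qed

lemma sum_shift1:
  fixes f :: "nat \<Rightarrow> 'a::comm_monoid_add"
  shows "(\<Sum>i\<in>{1..<t}. f (i - 1)) = (\<Sum>i<t - 1. f i)"
proof -
  have "{1..<t} = Suc ` {..<t - 1}" 
  proof (intro equalityI subsetI)
    fix i assume "i \<in> {1..<t}" thus "i \<in> Suc ` {..<t - 1}" by (auto simp: image_iff intro!: bexI[of _ "i - 1"])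
  qed auto
  then show ?thesis by (simp add: sum.reindex)
qed

definition qv :: "('p \<Rightarrow> 'b set) \<Rightarrow> ('s \<Rightarrow> ('p \<Rightarrow> 'b) \<Rightarrow> 's \<Rightarrow> real^'d) \<Rightarrow> real \<Rightarrow> real^'d
   \<Rightarrow> 's \<Rightarrow> ('p \<Rightarrow> 'b) \<Rightarrow> 's \<Rightarrow> real" where
  "qv A \<phi> \<epsilon> c s a s' = (if a \<in> joint_actions A then \<phi> s a s' \<bullet> c + \<epsilon> else 1)"

definition Zf :: "('s \<Rightarrow> ('p \<Rightarrow> 'b) \<Rightarrow> 's pmf) \<Rightarrow> ('p \<Rightarrow> 'b set) \<Rightarrow> ('s \<Rightarrow> ('p \<Rightarrow> 'b) \<Rightarrow> 's \<Rightarrow> real^'d)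
   \<Rightarrow> real \<Rightarrow> real^'d \<Rightarrow> ('s,'p,'b) transition \<Rightarrow> real" where
  "Zf P A \<phi> \<epsilon> c z = (case z of (s, a, s') \<Rightarrow>
     if pmf (P s a) s' = 0 then 0 else ln (qv A \<phi> \<epsilon> c s a s' / pmf (P s a) s') / 2)"

lemma exp_half_ln: assumes "0 < x" shows "exp (ln x / 2) = sqrt x"
proof -
  have "exp (ln x / 2) ^ 2 = x" using assms by (simp add: power2_eq_square exp_add[symmetric])
  moreover have "0 \<le> exp (ln x / 2)" by simp
  ultimately show ?thesis by (metis real_sqrt_unique)
qed

lemma p_exp_Z: assumes "0 < p" "0 < q" shows "p * exp (ln (q / p) / 2) = sqrt (p * q)"
proof -
  have "p * q = p^2 * (q / p)" using assms by (simp add: power2_eq_square)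
  hence "sqrt (p * q) = sqrt (p^2) * sqrt (q / p)" by (metis real_sqrt_mult)
  also have "\<dots> = p * exp (ln (q / p) / 2)" using assms by (simp add: exp_half_ln)
  finally show ?thesis by simp
qed

lemma qv_pos:
  assumes kern: "\<forall>s. \<forall>a\<in>joint_actions A. (\<forall>s'. 0 \<le> \<phi> s a s' \<bullet> c)" and e: "0 < \<epsilon>"
  shows "min \<epsilon> 1 \<le> qv A \<phi> \<epsilon> c s a s'"
proof (cases "a \<in> joint_actions A")
  case True
  hence "0 \<le> \<phi> s a s' \<bullet> c" using kern by auto
  moreover have "min \<epsilon> 1 \<le> \<epsilon>" by simp
  ultimately show ?thesis using True unfolding qv_def by simp
qed (simp add: qv_def)

lemma exp_Zf_lower:
  assumes kern: "\<forall>s. \<forall>a\<in>joint_actions A. (\<forall>s'. 0 \<le> \<phi> s a s' \<bullet> c)" and e: "0 < \<epsilon>"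
  shows "sqrt (min \<epsilon> 1) \<le> exp (Zf P A \<phi> \<epsilon> c z)"
proof -
  obtain s a s' where z: "z = (s, a, s')" by (metis prod_cases3)
  let ?p = "pmf (P s a) s'" and ?q = "qv A \<phi> \<epsilon> c s a s'"
  have q: "min \<epsilon> 1 \<le> ?q" by (rule qv_pos[OF kern e])
  show ?thesis
  proof (cases "?p = 0")
    case True then show ?thesis using z e by (simp add: Zf_def min_def)
  next
    case False
    hence p: "0 < ?p" "?p \<le> 1" by (auto simp: pmf_le_1 order_less_le)
    have qp: "0 < ?q" using q e by (smt (verit))
    have "exp (Zf P A \<phi> \<epsilon> c z) = sqrt (?q / ?p)" using False z p qp by (simp add: Zf_def exp_half_ln)
    moreover have "?q \<le> ?q / ?p" using p qp by (simp add: le_divide_eq)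
    ultimately show ?thesis using q by (metis order_trans real_sqrt_le_mono)
  qed
qed

lemma inner_integral:
  fixes P :: "'s::finite \<Rightarrow> ('p \<Rightarrow> 'b) \<Rightarrow> 's pmf"
  assumes q: "\<And>s'. 0 < qv A \<phi> \<epsilon> c s a s'"
  shows "(\<integral>\<^sup>+s'. ennreal (exp (Zf P A \<phi> \<epsilon> c (s, a, s'))) \<partial>measure_pmf (P s a))
       = ennreal (\<Sum>s'\<in>UNIV. sqrt (pmf (P s a) s' * qv A \<phi> \<epsilon> c s a s'))"
proof -
  have "(\<integral>\<^sup>+s'. ennreal (exp (Zf P A \<phi> \<epsilon> c (s, a, s'))) \<partial>measure_pmf (P s a))
      = (\<Sum>s'\<in>UNIV. ennreal (pmf (P s a) s') * ennreal (exp (Zf P A \<phi> \<epsilon> c (s, a, s'))))"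
    by (simp add: nn_integral_measure_pmf nn_integral_count_space_finite)
  also have "\<dots> = (\<Sum>s'\<in>UNIV. ennreal (sqrt (pmf (P s a) s' * qv A \<phi> \<epsilon> c s a s')))"
  proof (intro sum.cong refl)
    fix s'
    show "ennreal (pmf (P s a) s') * ennreal (exp (Zf P A \<phi> \<epsilon> c (s, a, s')))
          = ennreal (sqrt (pmf (P s a) s' * qv A \<phi> \<epsilon> c s a s'))"
    proof (cases "pmf (P s a) s' = 0")
      case True then show ?thesis by simp
    next
      case False
      hence "0 < pmf (P s a) s'" by (simp add: order_less_le)
      then show ?thesis using False q[of s']
        by (simp add: Zf_def ennreal_mult[symmetric] p_exp_Z)
    qed
  qed
  also have "\<dots> = ennreal (\<Sum>s'\<in>UNIV. sqrt (pmf (P s a) s' * qv A \<phi> \<epsilon> c s a s'))"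
    by (rule sum_ennreal) (intro real_sqrt_ge_zero, metis less_imp_le mult_nonneg_nonneg pmf_nonneg q)
  finally show ?thesis .
qed

lemma visitation_support:
  assumes "valid_jpolicy A \<pi>" "x \<in> set_pmf (visitation \<gamma> P \<pi> \<rho>)"
  shows "snd x \<in> joint_actions A"
  using assms unfolding visitation_def sa_dist_def jact_dist_def
  by (auto simp: set_Pi_pmf PiE_dflt_def joint_actions_def valid_jpolicy_def valid_policy_def) blast

lemma ell_bounds: "0 \<le> ell P \<phi> \<theta> s a" "ell P \<phi> \<theta> s a \<le> 1"
  unfolding ell_def by (rule hellinger_bounds)+

lemma ell_integrable: "integrable (measure_pmf M) (\<lambda>(s, a). ell P \<phi> \<theta> s a)"
  by (rule measure_pmf.integrable_const_bound[where B=1])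
     (auto intro!: AE_pmfI simp: abs_le_iff split: prod.splits intro: order_trans[OF _ ell_bounds(1)] ell_bounds(2))

lemma trans_bound:
  fixes P :: "'s::finite \<Rightarrow> ('p::finite \<Rightarrow> 'b) \<Rightarrow> 's pmf" and \<phi> :: "'s \<Rightarrow> ('p \<Rightarrow> 'b) \<Rightarrow> 's \<Rightarrow> real^'d"
  assumes kc: "\<forall>s. \<forall>a\<in>joint_actions A. (\<forall>s'. 0 \<le> \<phi> s a s' \<bullet> c) \<and> (\<Sum>s'\<in>UNIV. \<phi> s a s' \<bullet> c) = 1"
    and kt: "\<forall>s. \<forall>a\<in>joint_actions A. (\<forall>s'. 0 \<le> \<phi> s a s' \<bullet> \<theta>) \<and> (\<Sum>s'\<in>UNIV. \<phi> s a s' \<bullet> \<theta>) = 1"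
    and feat: "\<forall>s. \<forall>a\<in>joint_actions A. \<forall>s'. norm (\<phi> s a s') \<le> 1"
    and d: "dist \<theta> c < \<epsilon>" and e: "0 < \<epsilon>"
    and pol: "valid_jpolicy A \<pi>"
  shows "(\<integral>\<^sup>+z. ennreal (exp (Zf P A \<phi> \<epsilon> c z)) \<partial>measure_pmf (transition_sample \<gamma> P \<pi> \<rho>))
      \<le> ennreal (1 - measure_pmf.expectation (visitation \<gamma> P \<pi> \<rho>) (\<lambda>(s, a). ell P \<phi> \<theta> s a)
                 + real CARD('s) * sqrt (2 * \<epsilon>))"
proof -
  let ?V = "visitation \<gamma> P \<pi> \<rho>"
  let ?\<eta> = "real CARD('s) * sqrt (2 * \<epsilon>)"
  let ?E = "\<lambda>x. (case x of (s, a) \<Rightarrow> ell P \<phi> \<theta> s a)"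
  have "(\<integral>\<^sup>+z. ennreal (exp (Zf P A \<phi> \<epsilon> c z)) \<partial>measure_pmf (transition_sample \<gamma> P \<pi> \<rho>))
      = (\<integral>\<^sup>+x. (\<integral>\<^sup>+s'. ennreal (exp (Zf P A \<phi> \<epsilon> c (fst x, snd x, s'))) \<partial>measure_pmf (P (fst x) (snd x))) \<partial>measure_pmf ?V)"
    unfolding transition_sample_def
    by (simp add: nn_integral_bind_pmf) (intro nn_integral_cong, auto split: prod.splits)
  also have "\<dots> \<le> (\<integral>\<^sup>+x. ennreal (1 + ?\<eta> - ?E x) \<partial>measure_pmf ?V)"
  proof (rule nn_integral_mono_AE, rule AE_pmfI)
    fix x assume x: "x \<in> set_pmf ?V"
    obtain s a where sa: "x = (s, a)" by (cases x)
    have a: "a \<in> joint_actions A" using visitation_support[OF pol x] sa by simp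
    have qpos: "\<And>s'. 0 < qv A \<phi> \<epsilon> c s a s'"
      using qv_pos[of A \<phi> c \<epsilon> s a] kc e by (smt (verit) min_less_iff_disj)
    have pt: "\<And>s'. pmf (model_kernel \<phi> \<theta> s a) s' = \<phi> s a s' \<bullet> \<theta>"
      using kt a by (intro pmf_model) auto
    have qle: "qv A \<phi> \<epsilon> c s a s' \<le> pmf (model_kernel \<phi> \<theta> s a) s' + 2 * \<epsilon>" for s'
    proof -
      have "\<phi> s a s' \<bullet> c - \<phi> s a s' \<bullet> \<theta> = \<phi> s a s' \<bullet> (c - \<theta>)" by (simp add: inner_diff_right)
      also have "\<dots> \<le> \<bar>\<phi> s a s' \<bullet> (c - \<theta>)\<bar>" by simp
      also have "\<dots> \<le> norm (\<phi> s a s') * norm (c - \<theta>)" by (rule Cauchy_Schwarz_ineq2)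
      also have "\<dots> \<le> 1 * \<epsilon>"
        using feat a d by (intro mult_mono) (auto simp: dist_norm norm_minus_commute)
      finally show ?thesis using pt a by (simp add: qv_def)
    qed
    have "(\<integral>\<^sup>+s'. ennreal (exp (Zf P A \<phi> \<epsilon> c (fst x, snd x, s'))) \<partial>measure_pmf (P (fst x) (snd x)))
        = ennreal (\<Sum>s'\<in>UNIV. sqrt (pmf (P s a) s' * qv A \<phi> \<epsilon> c s a s'))"
      using sa inner_integral[OF qpos] by simp
    also have "\<dots> \<le> ennreal (1 - hellinger_sq (model_kernel \<phi> \<theta> s a) (P s a) + ?\<eta>)"
      by (intro ennreal_leI sum_sqrt_bound) (use qpos qle e in \<open>auto intro: less_imp_le\<close>)
    also have "\<dots> = ennreal (1 + ?\<eta> - ?E x)" using sa by (simp add: ell_def algebra_simps)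
    finally show "(\<integral>\<^sup>+s'. ennreal (exp (Zf P A \<phi> \<epsilon> c (fst x, snd x, s'))) \<partial>measure_pmf (P (fst x) (snd x)))
        \<le> ennreal (1 + ?\<eta> - ?E x)" .
  qed
  also have "\<dots> = ennreal (measure_pmf.expectation ?V (\<lambda>x. 1 + ?\<eta> - ?E x))"
  proof (rule nn_integral_eq_integral)
    show "integrable (measure_pmf ?V) (\<lambda>x. 1 + ?\<eta> - ?E x)"
      using ell_integrable[of ?V P \<phi> \<theta>] by (intro Bochner_Integration.integrable_diff) auto
    show "AE x in measure_pmf ?V. 0 \<le> 1 + ?\<eta> - ?E x"
      using ell_bounds(2)[of P \<phi> \<theta>] e by (intro AE_pmfI) (auto split: prod.splits intro!: add_increasing2)
  qed
  also have "measure_pmf.expectation ?V (\<lambda>x. 1 + ?\<eta> - ?E x) = 1 + ?\<eta> - measure_pmf.expectation ?V ?E"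
    using ell_integrable[of ?V P \<phi> \<theta>] by (subst Bochner_Integration.integral_diff) auto
  finally show ?thesis by (simp add: algebra_simps)
qed

lemma llr_le_Z:
  assumes ple: "\<And>s a s'. pmf (model_kernel \<phi> \<theta> s a) s' \<le> qv A \<phi> \<epsilon> c s a s'"
    and qpos: "\<And>s a s'. 0 < qv A \<phi> \<epsilon> c s a s'"
  shows "- llr_sample P \<phi> \<theta> z \<le> ereal (2 * Zf P A \<phi> \<epsilon> c z)"
proof -
  obtain s a s' where z: "z = (s, a, s')" by (metis prod_cases3)
  let ?p = "pmf (P s a) s'" and ?pt = "pmf (model_kernel \<phi> \<theta> s a) s'" and ?q = "qv A \<phi> \<epsilon> c s a s'"
  show ?thesis
  proof (cases "?pt = 0")
    case True then show ?thesis using z by (simp add: llr_sample_def llr_def)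
  next
    case False
    hence pt: "0 < ?pt" by (simp add: order_less_le)
    show ?thesis
    proof (cases "?p = 0")
      case True then show ?thesis using z False by (simp add: llr_sample_def llr_def Zf_def)
    next
      case p0: False
      hence p: "0 < ?p" by (simp add: order_less_le)
      have "- ln (?p / ?pt) = ln (?pt / ?p)" using p pt by (simp add: ln_div)
      also have "\<dots> \<le> ln (?q / ?p)" using p pt ple[of s a s'] by (simp add: divide_right_mono)
      finally show ?thesis using z False p0 by (simp add: llr_sample_def llr_def Zf_def)
    qed
  qed
qed

lemma marg_fst:
  "(\<integral>\<^sup>+w. f (fst w) \<partial>measure_pmf (round_dist \<gamma> P \<rho> \<pi> \<pi>t))
     = (\<integral>\<^sup>+z. f z \<partial>measure_pmf (transition_sample \<gamma> P \<pi> \<rho>))"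
proof -
  have "(\<integral>\<^sup>+w. f (fst w) \<partial>measure_pmf (round_dist \<gamma> P \<rho> \<pi> \<pi>t))
      = (\<integral>\<^sup>+z. f z \<partial>measure_pmf (map_pmf fst (round_dist \<gamma> P \<rho> \<pi> \<pi>t)))" by simp
  also have "map_pmf fst (round_dist \<gamma> P \<rho> \<pi> \<pi>t) = transition_sample \<gamma> P \<pi> \<rho>"
    unfolding round_dist_def by (rule map_fst_pair_pmf)
  finally show ?thesis .
qed

lemma marg_snd:
  "(\<integral>\<^sup>+w. f (snd w n) \<partial>measure_pmf (round_dist \<gamma> P \<rho> \<pi> \<pi>t))
     = (\<integral>\<^sup>+z. f z \<partial>measure_pmf (transition_sample \<gamma> P (\<pi>(n := \<pi>t n)) \<rho>))"
proof -
  have "(\<integral>\<^sup>+w. f (snd w n) \<partial>measure_pmf (round_dist \<gamma> P \<rho> \<pi> \<pi>t))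
      = (\<integral>\<^sup>+z. f z \<partial>measure_pmf (map_pmf (\<lambda>g. g n) (map_pmf snd (round_dist \<gamma> P \<rho> \<pi> \<pi>t))))"
    by (simp add: map_pmf_comp)
  also have "map_pmf (\<lambda>g. g n) (map_pmf snd (round_dist \<gamma> P \<rho> \<pi> \<pi>t)) = transition_sample \<gamma> P (\<pi>(n := \<pi>t n)) \<rho>"
    unfolding round_dist_def map_snd_pair_pmf by (simp add: Pi_pmf_component)
  finally show ?thesis .
qed

lemma run_grun: "run_dist \<gamma> P \<rho> Pol Br k = grun (\<lambda>hs. round_dist \<gamma> P \<rho> (Pol hs) (Br hs)) k"
  by (induction k) auto

lemma core:
  fixes Z m E :: "nat \<Rightarrow> real" and x :: "nat \<Rightarrow> ereal"
  assumes xz: "\<And>i. i < t' \<Longrightarrow> - x i \<le> ereal (2 * Z i)"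
    and mb: "\<And>i. i < t' \<Longrightarrow> 0 < m i \<and> m i \<le> 1 - E i + \<eta>"
    and pr: "(\<Prod>i<t'. exp (Z i) / m i) < cc" and cc: "0 < cc"
  shows "- (\<Sum>i<t'. x i) \<le> ereal (- 2 * (\<Sum>i<t'. E i) + 2 * (real t' * \<eta>) + 2 * ln cc)"
proof -
  have "(\<Prod>i<t'. exp (Z i) / m i) = exp (\<Sum>i<t'. Z i - ln (m i))"
    by (simp add: exp_sum exp_diff mb)
  hence "exp (\<Sum>i<t'. Z i - ln (m i)) < cc" using pr by simp
  hence "ln (exp (\<Sum>i<t'. Z i - ln (m i))) < ln cc" using cc by (subst ln_less_cancel_iff) auto
  hence "(\<Sum>i<t'. Z i - ln (m i)) < ln cc" by simp
  hence "(\<Sum>i<t'. Z i) < (\<Sum>i<t'. ln (m i)) + ln cc" by (simp add: sum_subtractf)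
  also have "(\<Sum>i<t'. ln (m i)) \<le> (\<Sum>i<t'. \<eta> - E i)"
  proof (rule sum_mono)
    fix i assume "i \<in> {..<t'}"
    hence "0 < m i" "m i \<le> 1 - E i + \<eta>" using mb by auto
    thus "ln (m i) \<le> \<eta> - E i" using ln_le_minus_one[of "m i"] by linarith
  qed
  finally have "(\<Sum>i<t'. Z i) < real t' * \<eta> - (\<Sum>i<t'. E i) + ln cc" by (simp add: sum_subtractf)
  hence "2 * (\<Sum>i<t'. Z i) \<le> - 2 * (\<Sum>i<t'. E i) + 2 * (real t' * \<eta>) + 2 * ln cc" by linarith
  moreover have "- (\<Sum>i<t'. x i) \<le> ereal (\<Sum>i<t'. 2 * Z i)"
    by (rule neg_sum_ereal_le) (use xz in auto)
  moreover have "(\<Sum>i<t'. 2 * Z i) = 2 * (\<Sum>i<t'. Z i)" by (simp add: sum_distrib_left)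
  ultimately show ?thesis by (metis ereal_less_eq(3) order_trans)
qed

theorem lemmaC2:
  fixes A :: "'p::finite \<Rightarrow> 'b set"
    and P :: "'s::finite \<Rightarrow> ('p \<Rightarrow> 'b) \<Rightarrow> 's pmf"
    and r :: "'p \<Rightarrow> 's \<Rightarrow> ('p \<Rightarrow> 'b) \<Rightarrow> real"
    and \<rho> :: "'s pmf"
    and \<gamma> \<beta> \<alpha> \<delta> :: real
    and \<pi>ref :: "'p \<Rightarrow> 's \<Rightarrow> 'b pmf"
    and \<phi> :: "'s \<Rightarrow> ('p \<Rightarrow> 'b) \<Rightarrow> 's \<Rightarrow> real^'d::finite"
    and \<Theta> :: "(real^'d) set"
    and T :: nat
    and \<theta>0 :: "real^'d"
    and Pol :: "('s,'p,'b) round list \<Rightarrow> 'p \<Rightarrow> 's \<Rightarrow> 'b pmf"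
    and Th :: "('s,'p,'b) round list \<Rightarrow> real^'d"
    and Br :: "('s,'p,'b) round list \<Rightarrow> 'p \<Rightarrow> 's \<Rightarrow> 'b pmf"
  assumes actions: "\<forall>n. finite (A n) \<and> A n \<noteq> {}"
    and discount: "0 \<le> \<gamma>" "\<gamma> < 1"
    and kl_coeff: "0 \<le> \<beta>"
    and alpha_pos: "0 < \<alpha>"
    and rewards: "\<forall>n s. \<forall>a\<in>joint_actions A. 0 \<le> r n s a \<and> r n s a \<le> 1"
    and ref_policies: "valid_jpolicy A \<pi>ref"
    and feature_bound: "\<forall>s. \<forall>a\<in>joint_actions A. \<forall>s'. norm (\<phi> s a s') \<le> 1"
    and param_bound: "\<forall>\<theta>\<in>\<Theta>. norm \<theta> \<le> sqrt (real CARD('d))"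
    and model_is_kernel: "\<forall>\<theta>\<in>\<Theta>. \<forall>s. \<forall>a\<in>joint_actions A.
            (\<forall>s'. 0 \<le> \<phi> s a s' \<bullet> \<theta>) \<and> (\<Sum>s'\<in>UNIV. \<phi> s a s' \<bullet> \<theta>) = 1"
    and realizable: "\<exists>\<theta>\<^sub>s\<in>\<Theta>. \<forall>s. \<forall>a\<in>joint_actions A. \<forall>s'. pmf (P s a) s' = \<phi> s a s' \<bullet> \<theta>\<^sub>s"
    and init: "\<theta>0 \<in> \<Theta>"
    and alg_equilibrium: "\<forall>hs. length hs < T \<longrightarrow>
            is_equilibrium \<gamma> \<beta> \<pi>ref r A
              (model_kernel \<phi> (if hs = [] then \<theta>0 else Th (butlast hs))) (Pol hs) \<rho>"
    and alg_mle: "\<forall>hs. length hs < T \<longrightarrow> Th hs \<in> \<Theta> \<and>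
            (\<forall>\<theta>\<in>\<Theta>. mle_objective \<gamma> \<beta> \<pi>ref r A \<phi> \<alpha> \<rho> hs (Pol hs) (Th hs)
                      \<le> mle_objective \<gamma> \<beta> \<pi>ref r A \<phi> \<alpha> \<rho> hs (Pol hs) \<theta>)"
    and alg_best_response: "\<forall>hs. length hs < T \<longrightarrow> (\<forall>n. valid_policy (A n) (Br hs n) \<and>
            game_value \<gamma> \<beta> \<pi>ref r (model_kernel \<phi> (Th hs)) ((Pol hs)(n := Br hs n)) n \<rho>
              = br_value \<gamma> \<beta> \<pi>ref r A (model_kernel \<phi> (Th hs)) (Pol hs) n \<rho>)"
    and delta: "0 < \<delta>" "\<delta> < 1"
  shows "measure_pmf.prob (run_dist \<gamma> P \<rho> Pol Br T)
     {hs. (\<forall>t\<in>{1..T}. \<forall>\<theta>\<in>\<Theta>.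
             - (\<Sum>i\<in>{1..<t}. llr_sample P \<phi> \<theta> (fst (hs ! (i - 1))))
             \<le> ereal (- 2 * (\<Sum>i\<in>{1..<t}. measure_pmf.expectation
                                (visitation \<gamma> P (Pol (take (i - 1) hs)) \<rho>)
                                (\<lambda>(s, a). ell P \<phi> \<theta> s a))
                     + 2 * sqrt 2 + 2 * ln ((real CARD('p) + 1) / \<delta>)
                     + 2 * real CARD('d) * ln (1 + 2 * sqrt (real CARD('d)) * (real T)^2 * (real CARD('s))^2)))
        \<and> (\<forall>t\<in>{1..T}. \<forall>\<theta>\<in>\<Theta>. \<forall>n.
             - (\<Sum>i\<in>{1..<t}. llr_sample P \<phi> \<theta> (snd (hs ! (i - 1)) n))
             \<le> ereal (- 2 * (\<Sum>i\<in>{1..<t}. measure_pmf.expectation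
                                (visitation \<gamma> P ((Pol (take (i - 1) hs))(n := Br (take (i - 1) hs) n)) \<rho>)
                                (\<lambda>(s, a). ell P \<phi> \<theta> s a))
                     + 2 * sqrt 2 + 2 * ln ((real CARD('p) + 1) / \<delta>)
                     + 2 * real CARD('d) * ln (1 + 2 * sqrt (real CARD('d)) * (real T)^2 * (real CARD('s))^2)))}
   \<ge> 1 - \<delta>"
proof (cases "T = 0")
  case True
  then show ?thesis using delta by simp
next
  case False
  hence T1: "1 \<le> T" by simp
  define S where "S = real CARD('s)"
  define dd where "dd = real CARD('d)"
  define \<epsilon> where "\<epsilon> = 1 / (real T ^ 2 * S ^ 2)"
  have S0: "1 \<le> S" unfolding S_def by simp
  have eps: "0 < \<epsilon>" unfolding \<epsilon>_def using T1 S0 by simp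
  have sub: "\<Theta> \<subseteq> cball 0 (sqrt dd)" using param_bound unfolding dd_def by auto
  obtain C where Cfin: "finite C" and CT: "C \<subseteq> \<Theta>"
    and Ccard: "real (card C) \<le> (1 + 2 * sqrt dd / \<epsilon>) ^ CARD('d)"
    and Ccov: "\<forall>\<theta>\<in>\<Theta>. \<exists>c\<in>C. dist \<theta> c < \<epsilon>"
    using cover_exists[OF sub eps] unfolding dd_def by (metis of_nat_0_le_iff real_sqrt_ge_zero)
  have Cne: "C \<noteq> {}" using Ccov init by auto
  hence Cpos: "0 < card C" using Cfin by (simp add: card_gt_0_iff)
  define Nq where "Nq = real CARD('p) + 1"
  define cc where "cc = real (card C) * Nq / \<delta>"
  have cc0: "0 < cc" unfolding cc_def Nq_def using Cpos delta by simp
  define comp :: "'p option \<Rightarrow> ('s,'p,'b) round \<Rightarrow> ('s,'p,'b) transition" where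
    "comp G w = (case G of None \<Rightarrow> fst w | Some n \<Rightarrow> snd w n)" for G w
  define pol :: "'p option \<Rightarrow> ('s,'p,'b) round list \<Rightarrow> 'p \<Rightarrow> 's \<Rightarrow> 'b pmf" where
    "pol G hs = (case G of None \<Rightarrow> Pol hs | Some n \<Rightarrow> (Pol hs)(n := Br hs n))" for G hs
  define K where "K hs = round_dist \<gamma> P \<rho> (Pol hs) (Br hs)" for hs
  define I where "I G c hs = (\<integral>\<^sup>+z. ennreal (exp (Zf P A \<phi> \<epsilon> c z)) \<partial>measure_pmf (transition_sample \<gamma> P (pol G hs) \<rho>))" for G c hs
  define m where "m G c hs = enn2real (I G c hs)" for G c hs
  define g where "g G c hs w = exp (Zf P A \<phi> \<epsilon> c (comp G w)) / m G c hs" for G c hs w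
  define \<eta> where "\<eta> = S * sqrt (2 * \<epsilon>)"
  define Ev where "Ev G hs \<theta> = measure_pmf.expectation (visitation \<gamma> P (pol G hs) \<rho>) (\<lambda>(s, a). ell P \<phi> \<theta> s a)" for G hs \<theta>

  have kern: "\<forall>s. \<forall>a\<in>joint_actions A. (\<forall>s'. 0 \<le> \<phi> s a s' \<bullet> c) \<and> (\<Sum>s'\<in>UNIV. \<phi> s a s' \<bullet> c) = 1"
    if "c \<in> \<Theta>" for c using model_is_kernel that by blast
  have polv: "valid_jpolicy A (pol G hs)" if "length hs < T" for G hs
  proof -
    have v1: "valid_jpolicy A (Pol hs)" using alg_equilibrium that by (simp add: is_equilibrium_def)
    have v2: "valid_policy (A n) (Br hs n)" for n using alg_best_response that by blast
    show ?thesis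
    proof (cases G)
      case None then show ?thesis using v1 by (simp add: pol_def)
    next
      case (Some n) then show ?thesis using v1 v2 by (auto simp: pol_def valid_jpolicy_def)
    qed
  qed
  have marg: "(\<integral>\<^sup>+w. f (comp G w) \<partial>measure_pmf (K hs)) = (\<integral>\<^sup>+z. f z \<partial>measure_pmf (transition_sample \<gamma> P (pol G hs) \<rho>))"
    for f G hs
    by (cases G) (simp_all add: comp_def pol_def K_def marg_fst marg_snd)
  have Ibound: "I G c hs \<le> ennreal (1 - Ev G hs \<theta> + \<eta>)"
    if "length hs < T" "c \<in> \<Theta>" "\<theta> \<in> \<Theta>" "dist \<theta> c < \<epsilon>" for G c hs \<theta>
    unfolding I_def Ev_def \<eta>_def S_def
    by (rule trans_bound[OF kern[OF that(2)] kern[OF that(3)] feature_bound that(4) eps polv[OF that(1)]])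
  have Ilow: "ennreal (sqrt (min \<epsilon> 1)) \<le> I G c hs" if "c \<in> \<Theta>" for G c hs
  proof -
    have "(\<integral>\<^sup>+z. ennreal (sqrt (min \<epsilon> 1)) \<partial>measure_pmf (transition_sample \<gamma> P (pol G hs) \<rho>)) \<le> I G c hs"
      unfolding I_def using exp_Zf_lower[of A \<phi> c \<epsilon>] kern[OF that] eps
      by (intro nn_integral_mono ennreal_leI) auto
    then show ?thesis by simp
  qed
  have Ipos: "0 < I G c hs" if "c \<in> \<Theta>" for G c hs
  proof -
    have "0 < ennreal (sqrt (min \<epsilon> 1))" using eps by (simp add: min_def)
    thus ?thesis using Ilow[OF that, of G hs] by (rule order_less_le_trans)
  qed
  have mpos: "0 < m G c hs" if "length hs < T" "c \<in> \<Theta>" for G c hs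
  proof -
    have "I G c hs \<le> ennreal (1 - Ev G hs c + \<eta>)" using Ibound[OF that that(2)] eps by simp
    hence "I G c hs < top" using top.not_eq_extremum by (metis ennreal_less_top order_le_less_trans)
    then show ?thesis using Ipos[OF that(2)] by (simp add: m_def enn2real_positive_iff)
  qed
  have mbound: "m G c hs \<le> 1 - Ev G hs \<theta> + \<eta>"
    if "length hs < T" "c \<in> \<Theta>" "\<theta> \<in> \<Theta>" "dist \<theta> c < \<epsilon>" for G c hs \<theta>
  proof -
    have b: "I G c hs \<le> ennreal (1 - Ev G hs \<theta> + \<eta>)" by (rule Ibound[OF that])
    hence "0 < ennreal (1 - Ev G hs \<theta> + \<eta>)" using Ipos[OF that(2)] by (metis order_less_le_trans)
    hence pos: "0 < 1 - Ev G hs \<theta> + \<eta>" by (simp add: ennreal_less_zero_iff)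
    have "enn2real (I G c hs) \<le> enn2real (ennreal (1 - Ev G hs \<theta> + \<eta>))"
      using b by (intro enn2real_mono) auto
    thus ?thesis using pos by (simp add: m_def)
  qed
  have gnn: "0 \<le> g G c hs w" for G c hs w unfolding g_def m_def by simp
  have gmean: "(\<integral>\<^sup>+w. ennreal (g G c hs w) \<partial>measure_pmf (K hs)) \<le> 1"
    if "length hs < T" "c \<in> \<Theta>" for G c hs
  proof -
    have mp: "0 < m G c hs" by (rule mpos[OF that])
    have "(\<integral>\<^sup>+w. ennreal (g G c hs w) \<partial>measure_pmf (K hs))
        = (\<integral>\<^sup>+w. ennreal (exp (Zf P A \<phi> \<epsilon> c (comp G w))) * ennreal (1 / m G c hs) \<partial>measure_pmf (K hs))"
      unfolding g_def using mp by (intro nn_integral_cong) (simp add: ennreal_mult[symmetric] divide_inverse)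
    also have "\<dots> = (\<integral>\<^sup>+w. ennreal (exp (Zf P A \<phi> \<epsilon> c (comp G w))) \<partial>measure_pmf (K hs)) * ennreal (1 / m G c hs)"
      by (rule nn_integral_multc) simp
    also have "\<dots> = I G c hs * ennreal (1 / m G c hs)"
      using marg[where f="\<lambda>z. ennreal (exp (Zf P A \<phi> \<epsilon> c z))" and G=G and hs=hs] by (simp add: I_def)
    also have "I G c hs = ennreal (m G c hs)"
      using mp unfolding m_def by (simp add: enn2real_positive_iff)
    also have "ennreal (m G c hs) * ennreal (1 / m G c hs) = ennreal (m G c hs * (1 / m G c hs))"
      using mp by (simp add: ennreal_mult[symmetric])
    also have "\<dots> = 1" using mp by simp
    finally show ?thesis by simp
  qed
  define B where "B G c = {hs. \<exists>t\<le>T. cc \<le> prodg (g G c) hs t}" for G c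
  have run: "run_dist \<gamma> P \<rho> Pol Br T = grun K T" unfolding K_def by (rule run_grun)
  have ville: "measure_pmf.prob (run_dist \<gamma> P \<rho> Pol Br T) (B G c) \<le> 1 / cc" if "c \<in> \<Theta>" for G c
    unfolding run B_def by (rule ville_pmf[OF gnn gmean[OF _ that] cc0])
  define U where "U = (\<Union>x\<in>UNIV \<times> C. B (fst x) (snd x))"
  have cardU: "card (UNIV :: 'p option set) = CARD('p) + 1"
    by (simp add: UNIV_option_conv card_image)
  have "measure_pmf.prob (run_dist \<gamma> P \<rho> Pol Br T) U
      \<le> (\<Sum>x\<in>UNIV \<times> C. measure_pmf.prob (run_dist \<gamma> P \<rho> Pol Br T) (B (fst x) (snd x)))"
    unfolding U_def by (rule measure_pmf.finite_measure_subadditive_finite) (use Cfin in auto)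
  also have "\<dots> \<le> (\<Sum>x\<in>(UNIV :: 'p option set) \<times> C. 1 / cc)"
    using ville CT by (intro sum_mono) auto
  also have "\<dots> = \<delta>"
  proof -
    have "real (card C) * (real CARD('p) + 1) > 0" using Cpos by simp
    thus ?thesis using Cpos delta cardU by (simp add: cc_def Nq_def card_cartesian_product field_simps)
  qed
  finally have probU: "measure_pmf.prob (run_dist \<gamma> P \<rho> Pol Br T) U \<le> \<delta>" .

  define Cst where "Cst = 2 * sqrt 2 + 2 * ln ((real CARD('p) + 1) / \<delta>)
                     + 2 * real CARD('d) * ln (1 + 2 * sqrt (real CARD('d)) * (real T)^2 * (real CARD('s))^2)"
  have etaT: "real t' * \<eta> \<le> sqrt 2" if "t' \<le> T" for t'
  proof -
    have "\<eta> = sqrt 2 / real T"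
      unfolding \<eta>_def \<epsilon>_def using T1 S0
      by (simp add: real_sqrt_divide real_sqrt_mult field_simps)
    moreover have "0 \<le> \<eta>" unfolding \<eta>_def using S0 eps by simp
    moreover have "real t' \<le> real T" using that by simp
    ultimately have "real t' * \<eta> \<le> real T * \<eta>" by (intro mult_right_mono) auto
    also have "real T * \<eta> = sqrt 2" using \<open>\<eta> = sqrt 2 / real T\<close> T1 by simp
    finally show ?thesis .
  qed
  have lncc: "ln cc \<le> ln ((real CARD('p) + 1) / \<delta>)
       + real CARD('d) * ln (1 + 2 * sqrt (real CARD('d)) * (real T)^2 * (real CARD('s))^2)"
  proof -
    have "ln cc = ln (real (card C)) + ln (Nq / \<delta>)"
    proof -
      have "cc = real (card C) * (Nq / \<delta>)" unfolding cc_def by simp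
      moreover have "0 < Nq / \<delta>" unfolding Nq_def using delta by simp
      moreover have "0 < real (card C)" using Cpos by simp
      moreover have "Nq \<noteq> 0" unfolding Nq_def by simp
      ultimately show ?thesis using ln_mult[of "real (card C)" "Nq / \<delta>"] delta by simp
    qed
    also have "ln (real (card C)) \<le> ln ((1 + 2 * sqrt dd / \<epsilon>) ^ CARD('d))"
      using Cpos Ccard by (subst ln_le_cancel_iff) auto
    also have "ln ((1 + 2 * sqrt dd / \<epsilon>) ^ CARD('d)) = dd * ln (1 + 2 * sqrt dd / \<epsilon>)"
      unfolding dd_def using eps by (subst ln_realpow) (auto intro!: add_pos_nonneg)
    also have "2 * sqrt dd / \<epsilon> = 2 * sqrt (real CARD('d)) * (real T)^2 * (real CARD('s))^2"
      unfolding \<epsilon>_def dd_def S_def by simp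
    finally show ?thesis by (simp add: Nq_def dd_def)
  qed
  have main: "- (\<Sum>i<t - 1. llr_sample P \<phi> \<theta> (comp G (hs ! i)))
       \<le> ereal (- 2 * (\<Sum>i<t - 1. Ev G (take i hs) \<theta>) + Cst)"
    if hs: "hs \<notin> U" and t: "t \<in> {1..T}" and th: "\<theta> \<in> \<Theta>" for hs t \<theta> G
  proof -
    obtain c where c: "c \<in> C" "dist \<theta> c < \<epsilon>" using Ccov th by blast
    have cT: "c \<in> \<Theta>" using c CT by auto
    have notB: "hs \<notin> B G c" using hs c unfolding U_def by auto
    have tle: "t - 1 \<le> T" using t by auto
    have pr: "(\<Prod>i<t - 1. exp (Zf P A \<phi> \<epsilon> c (comp G (hs ! i))) / m G c (take i hs)) < cc"
      using notB tle unfolding B_def prodg_def g_def by force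
    have qpos: "0 < qv A \<phi> \<epsilon> c s a s'" for s a s'
      using qv_pos[of A \<phi> c \<epsilon> s a s'] kern[OF cT] eps by (smt (verit) min_less_iff_disj)
    have ple: "pmf (model_kernel \<phi> \<theta> s a) s' \<le> qv A \<phi> \<epsilon> c s a s'" for s a s'
    proof (cases "a \<in> joint_actions A")
      case True
      have pt: "pmf (model_kernel \<phi> \<theta> s a) s' = \<phi> s a s' \<bullet> \<theta>"
        using kern[OF th] True by (intro pmf_model) auto
      have "\<phi> s a s' \<bullet> \<theta> - \<phi> s a s' \<bullet> c = \<phi> s a s' \<bullet> (\<theta> - c)" by (simp add: inner_diff_right)
      also have "\<dots> \<le> \<bar>\<phi> s a s' \<bullet> (\<theta> - c)\<bar>" by simp
      also have "\<dots> \<le> norm (\<phi> s a s') * norm (\<theta> - c)" by (rule Cauchy_Schwarz_ineq2)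
      also have "\<dots> \<le> 1 * \<epsilon>"
        using feature_bound True c by (intro mult_mono) (auto simp: dist_norm)
      finally show ?thesis using pt True by (simp add: qv_def)
    qed (simp add: qv_def pmf_le_1)
    have "- (\<Sum>i<t - 1. llr_sample P \<phi> \<theta> (comp G (hs ! i)))
       \<le> ereal (- 2 * (\<Sum>i<t - 1. Ev G (take i hs) \<theta>) + 2 * (real (t - 1) * \<eta>) + 2 * ln cc)"
    proof (rule core[OF _ _ pr cc0])
      show "- llr_sample P \<phi> \<theta> (comp G (hs ! i)) \<le> ereal (2 * Zf P A \<phi> \<epsilon> c (comp G (hs ! i)))" for i
        by (rule llr_le_Z[OF ple qpos])
      fix i assume "i < t - 1"
      hence len: "length (take i hs) < T" using tle by auto
      show "0 < m G c (take i hs) \<and> m G c (take i hs) \<le> 1 - Ev G (take i hs) \<theta> + \<eta>"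
        using mpos[OF len cT] mbound[OF len cT th c(2)] by auto
    qed
    also have "\<dots> \<le> ereal (- 2 * (\<Sum>i<t - 1. Ev G (take i hs) \<theta>) + Cst)"
      using etaT[OF tle] lncc unfolding Cst_def by simp
    finally show ?thesis .
  qed
  have good: "UNIV - U \<subseteq> {hs. (\<forall>t\<in>{1..T}. \<forall>\<theta>\<in>\<Theta>.
             - (\<Sum>i\<in>{1..<t}. llr_sample P \<phi> \<theta> (fst (hs ! (i - 1))))
             \<le> ereal (- 2 * (\<Sum>i\<in>{1..<t}. measure_pmf.expectation
                                (visitation \<gamma> P (Pol (take (i - 1) hs)) \<rho>)
                                (\<lambda>(s, a). ell P \<phi> \<theta> s a))
                     + 2 * sqrt 2 + 2 * ln ((real CARD('p) + 1) / \<delta>)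
                     + 2 * real CARD('d) * ln (1 + 2 * sqrt (real CARD('d)) * (real T)^2 * (real CARD('s))^2)))
        \<and> (\<forall>t\<in>{1..T}. \<forall>\<theta>\<in>\<Theta>. \<forall>n.
             - (\<Sum>i\<in>{1..<t}. llr_sample P \<phi> \<theta> (snd (hs ! (i - 1)) n))
             \<le> ereal (- 2 * (\<Sum>i\<in>{1..<t}. measure_pmf.expectation
                                (visitation \<gamma> P ((Pol (take (i - 1) hs))(n := Br (take (i - 1) hs) n)) \<rho>)
                                (\<lambda>(s, a). ell P \<phi> \<theta> s a))
                     + 2 * sqrt 2 + 2 * ln ((real CARD('p) + 1) / \<delta>)
                     + 2 * real CARD('d) * ln (1 + 2 * sqrt (real CARD('d)) * (real T)^2 * (real CARD('s))^2)))}"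
    (is "_ \<subseteq> ?Tg")
  proof (rule subsetI)
  fix hs assume "hs \<in> UNIV - U"
  hence hs: "hs \<notin> U" by simp
  show "hs \<in> ?Tg"
  proof (intro CollectI conjI ballI allI)
    fix t \<theta> assume t: "t \<in> {1..T}" and th: "\<theta> \<in> \<Theta>"
    have e1: "(\<Sum>i\<in>{1..<t}. llr_sample P \<phi> \<theta> (fst (hs ! (i - 1)))) = (\<Sum>i<t - 1. llr_sample P \<phi> \<theta> (comp None (hs ! i)))"
      using sum_shift1[where f="\<lambda>i. llr_sample P \<phi> \<theta> (fst (hs ! i))" and t=t] by (simp add: comp_def)
    have e2: "(\<Sum>i\<in>{1..<t}. measure_pmf.expectation (visitation \<gamma> P (Pol (take (i - 1) hs)) \<rho>) (\<lambda>(s, a). ell P \<phi> \<theta> s a))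
         = (\<Sum>i<t - 1. Ev None (take i hs) \<theta>)"
      using sum_shift1[where f="\<lambda>i. Ev None (take i hs) \<theta>" and t=t] by (simp add: Ev_def pol_def)
    show "- (\<Sum>i\<in>{1..<t}. llr_sample P \<phi> \<theta> (fst (hs ! (i - 1))))
             \<le> ereal (- 2 * (\<Sum>i\<in>{1..<t}. measure_pmf.expectation
                                (visitation \<gamma> P (Pol (take (i - 1) hs)) \<rho>)
                                (\<lambda>(s, a). ell P \<phi> \<theta> s a))
                     + 2 * sqrt 2 + 2 * ln ((real CARD('p) + 1) / \<delta>)
                     + 2 * real CARD('d) * ln (1 + 2 * sqrt (real CARD('d)) * (real T)^2 * (real CARD('s))^2))"
      using main[OF hs t th, of None] unfolding e1 e2 Cst_def by (simp add: algebra_simps)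
  next
    fix t \<theta> n assume t: "t \<in> {1..T}" and th: "\<theta> \<in> \<Theta>"
    have e1: "(\<Sum>i\<in>{1..<t}. llr_sample P \<phi> \<theta> (snd (hs ! (i - 1)) n)) = (\<Sum>i<t - 1. llr_sample P \<phi> \<theta> (comp (Some n) (hs ! i)))"
      using sum_shift1[where f="\<lambda>i. llr_sample P \<phi> \<theta> (snd (hs ! i) n)" and t=t] by (simp add: comp_def)
    have e2: "(\<Sum>i\<in>{1..<t}. measure_pmf.expectation (visitation \<gamma> P ((Pol (take (i - 1) hs))(n := Br (take (i - 1) hs) n)) \<rho>) (\<lambda>(s, a). ell P \<phi> \<theta> s a))
         = (\<Sum>i<t - 1. Ev (Some n) (take i hs) \<theta>)"
      using sum_shift1[where f="\<lambda>i. Ev (Some n) (take i hs) \<theta>" and t=t] by (simp add: Ev_def pol_def)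
    show "- (\<Sum>i\<in>{1..<t}. llr_sample P \<phi> \<theta> (snd (hs ! (i - 1)) n))
             \<le> ereal (- 2 * (\<Sum>i\<in>{1..<t}. measure_pmf.expectation
                                (visitation \<gamma> P ((Pol (take (i - 1) hs))(n := Br (take (i - 1) hs) n)) \<rho>)
                                (\<lambda>(s, a). ell P \<phi> \<theta> s a))
                     + 2 * sqrt 2 + 2 * ln ((real CARD('p) + 1) / \<delta>)
                     + 2 * real CARD('d) * ln (1 + 2 * sqrt (real CARD('d)) * (real T)^2 * (real CARD('s))^2))"
      using main[OF hs t th, of "Some n"] unfolding e1 e2 Cst_def by (simp add: algebra_simps)
  qed
  qed
  let ?M = "run_dist \<gamma> P \<rho> Pol Br T"
  have "1 - \<delta> \<le> 1 - measure_pmf.prob ?M U" using probU by simp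
  also have "\<dots> = measure_pmf.prob ?M (UNIV - U)"
    using measure_pmf.prob_compl[of U ?M] by (simp add: Compl_eq_Diff_UNIV)
  also have "\<dots> \<le> measure_pmf.prob ?M ?Tg"
    by (rule measure_pmf.finite_measure_mono[OF good]) simp
  finally show ?thesis .
qed

end
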